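(* Consider the noisy group testing model in the context with $K>1$ and $p=\frac{1}{(1-u)K}$, and let $\Gamma=(1-q)\left(1-(1-u)p\right)^K$, $\gamma_0=\frac{u}{1-(1-u)p}$, $\psi_0'=\min\left(\frac{\gamma_0\Gamma}{1-\gamma_0\Gamma},\frac{\Gamma}{2(1-\Gamma)}\right)$, and run CoLpAl with $\psi_{lp}=\psi_0'$. Then for any constant $c_0>0$ there exist absolute constants $C_{a1},C_{a2}>0$, independent of $N$, $L$ and $K$, such that if $$M\ \ge\ (1+c_0)\,\frac{K(1-u)}{(1-q)(1-\gamma_0)^2}\left(\frac{C_{a1}\log\left[K\binom{N-K}{L-1}\right]}{(N-K)-(L-1)}+C_{a2}\log K\right),$$ then, for a given defective set $S_d$, CoLpAl outputs $L$ non-defective items with probability exceeding $1-2\exp\left(-c_0\log\left(K\binom{N-K}{L-1}\right)\right)-\exp(-c_0\log K)$.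
   Context: Group testing model: $N$ items indexed by $[N]$; a fixed defective set $S_d\subset[N]$ with $|S_d|=K$; $1\le L\le N-K$. Parameters $p\in(0,1)$, $u\in[0,1/2)$, $q\in[0,1/2)$. The test matrix $\mathbf{X}\in\{0,1\}^{M\times N}$ has i.i.d. Bernoulli($p$) entries $X_{lk}$; independently, $D_{lk}\sim\mathrm{Bernoulli}(1-u)$ i.i.d. and $W_l\sim\mathrm{Bernoulli}(q)$ i.i.d.; outcomes $Y_l=\left(\bigvee_{k\in S_d}D_{lk}X_{lk}\right)\vee W_l$ ($\vee$ = boolean OR). Logarithms are natural. Let $Y_z=\{l:Y_l=0\}$, $M_z=|Y_z|$, $Y_p=\{l:Y_l=1\}$, $M_p=|Y_p|$, and $\mathbf{X}(Y_z,:)$, $\mathbf{X}(Y_p,:)$ the row-submatrices. $\underline{1}_n,\underline{0}_n$ are all-ones/all-zeros vectors, $\preccurlyeq$ componentwise inequality. LP2 (parameter $\psi_{lp}>0$): minimize over $\underline{z}\in\mathbb{R}^N$ the objective $\underline{1}_{M_z}^T\mathbf{X}(Y_z,:)(\underline{1}_N-\underline{z})-\psi_{lp}\,\underline{1}_{M_p}^T\mathbf{X}(Y_p,:)(\underline{1}_N-\underline{z})$ subject to $\underline{0}_N\preccurlyeq\underline{z}\preccurlyeq\underline{1}_N$ and $\underline{1}_N^T\underline{z}\le L$. Algorithm CoLpAl: solve LP2 to obtain an optimal $\hat{\underline{z}}$; output a set of $L$ items indexed by the $L$ largest entries of $\hat{\underline{z}}$ (ties arbitrary). Success means the output set is disjoint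 from $S_d$. *)

theory Defs
  imports "HOL-Probability.Probability"
begin

text \<open>Items are indexed by {..<N}, tests by {..<M}.  A test matrix / dilution pattern
  is a function nat \<Rightarrow> nat \<Rightarrow> bool (row l, column k); noise is nat \<Rightarrow> bool.\<close>

definition gt_dist :: "nat \<Rightarrow> nat \<Rightarrow> real \<Rightarrow> real \<Rightarrow> real \<Rightarrow>
    ((nat \<times> nat \<Rightarrow> bool) \<times> (nat \<times> nat \<Rightarrow> bool) \<times> (nat \<Rightarrow> bool)) pmf" where
  "gt_dist M N p u q =
     pair_pmf (Pi_pmf ({..<M} \<times> {..<N}) False (\<lambda>_. bernoulli_pmf p))
      (pair_pmf (Pi_pmf ({..<M} \<times> {..<N}) False (\<lambda>_. bernoulli_pmf (1 - u)))
                (Pi_pmf {..<M} False (\<lambda>_. bernoulli_pmf q)))"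

definition gt_outcome :: "nat set \<Rightarrow> (nat \<times> nat \<Rightarrow> bool) \<Rightarrow> (nat \<times> nat \<Rightarrow> bool)
    \<Rightarrow> (nat \<Rightarrow> bool) \<Rightarrow> nat \<Rightarrow> bool" where
  "gt_outcome Sd X D W l = ((\<exists>k\<in>Sd. D (l, k) \<and> X (l, k)) \<or> W l)"

definition lp2_obj :: "nat \<Rightarrow> nat \<Rightarrow> (nat \<times> nat \<Rightarrow> bool) \<Rightarrow> (nat \<Rightarrow> bool) \<Rightarrow> real
    \<Rightarrow> (nat \<Rightarrow> real) \<Rightarrow> real" where
  "lp2_obj M N X Y psi z =
     (\<Sum>l\<in>{l. l < M \<and> \<not> Y l}. \<Sum>k<N. (if X (l, k) then 1 else 0) * (1 - z k))
     - psi * (\<Sum>l\<in>{l. l < M \<and> Y l}. \<Sum>k<N. (if X (l, k) then 1 else 0) * (1 - z k))"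

definition lp2_feasible :: "nat \<Rightarrow> nat \<Rightarrow> (nat \<Rightarrow> real) \<Rightarrow> bool" where
  "lp2_feasible N L z \<longleftrightarrow> (\<forall>k<N. 0 \<le> z k \<and> z k \<le> 1) \<and> (\<Sum>k<N. z k) \<le> real L"

definition lp2_optimal :: "nat \<Rightarrow> nat \<Rightarrow> nat \<Rightarrow> (nat \<times> nat \<Rightarrow> bool) \<Rightarrow> (nat \<Rightarrow> bool)
    \<Rightarrow> real \<Rightarrow> (nat \<Rightarrow> real) \<Rightarrow> bool" where
  "lp2_optimal M N L X Y psi zh \<longleftrightarrow> lp2_feasible N L zh \<and>
     (\<forall>z. lp2_feasible N L z \<longrightarrow> lp2_obj M N X Y psi zh \<le> lp2_obj M N X Y psi z)"

definition top_L :: "nat \<Rightarrow> nat \<Rightarrow> (nat \<Rightarrow> real) \<Rightarrow> nat set \<Rightarrow> bool" where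
  "top_L N L zh T \<longleftrightarrow> T \<subseteq> {..<N} \<and> card T = L \<and>
     (\<forall>i\<in>T. \<forall>j\<in>{..<N} - T. zh j \<le> zh i)"

text \<open>CoLpAl succeeds: whatever optimal solution of LP2 is returned and however ties
  are broken, the output set is disjoint from S_d.\<close>
definition colpal_success :: "nat \<Rightarrow> nat \<Rightarrow> nat \<Rightarrow> nat set \<Rightarrow> real \<Rightarrow>
    (nat \<times> nat \<Rightarrow> bool) \<Rightarrow> (nat \<times> nat \<Rightarrow> bool) \<Rightarrow> (nat \<Rightarrow> bool) \<Rightarrow> bool" where
  "colpal_success M N L Sd psi X D W \<longleftrightarrow>
     (\<forall>zh T. lp2_optimal M N L X (gt_outcome Sd X D W) psi zh \<longrightarrow> top_L N L zh T
        \<longrightarrow> T \<inter> Sd = {})"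

end

theory Submission
  imports Defs
begin

lemma pmf_pair': "pmf (pair_pmf A B) x = pmf A (fst x) * pmf B (snd x)"
  by (cases x) (simp add: pmf_pair)

lemma Pi_pmf_zip:
  assumes "finite I"
  shows "map_pmf (\<lambda>(f,g) i. (f i, g i)) (pair_pmf (Pi_pmf I d1 P) (Pi_pmf I d2 Q)) =
         Pi_pmf I (d1,d2) (\<lambda>i. pair_pmf (P i) (Q i))"
proof (rule pmf_eqI)
  fix h :: "'a \<Rightarrow> 'b \<times> 'c"
  let ?z = "\<lambda>(f::'a\<Rightarrow>'b,g::'a\<Rightarrow>'c) i. (f i, g i)"
  have inj: "inj ?z"
    by (auto simp: inj_def fun_eq_iff)
  have h: "h = ?z (fst \<circ> h, snd \<circ> h)" by (auto simp: fun_eq_iff)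
  have "pmf (map_pmf ?z (pair_pmf (Pi_pmf I d1 P) (Pi_pmf I d2 Q))) h
      = pmf (pair_pmf (Pi_pmf I d1 P) (Pi_pmf I d2 Q)) (fst \<circ> h, snd \<circ> h)"
    by (subst h, subst pmf_map_inj'[OF inj]) simp
  also have "\<dots> = pmf (Pi_pmf I (d1,d2) (\<lambda>i. pair_pmf (P i) (Q i))) h"
    using assms
    by (auto simp: pmf_pair' pmf_Pi prod.distrib prod_eq_iff)
  finally show "pmf (map_pmf ?z (pair_pmf (Pi_pmf I d1 P) (Pi_pmf I d2 Q))) h =
        pmf (Pi_pmf I (d1,d2) (\<lambda>i. pair_pmf (P i) (Q i))) h" .
qed

lemma Pi_pmf_curry:
  assumes "finite I" "finite J"
  shows "map_pmf (\<lambda>X i j. X (i,j)) (Pi_pmf (I \<times> J) d (\<lambda>_. P)) =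
         Pi_pmf I (\<lambda>_. d) (\<lambda>_. Pi_pmf J d (\<lambda>_. P))"
proof (rule pmf_eqI)
  fix h :: "'a \<Rightarrow> 'b \<Rightarrow> 'c"
  let ?c = "\<lambda>(X::'a\<times>'b\<Rightarrow>'c) i j. X (i,j)"
  have inj: "inj ?c"
    by (auto simp: inj_def fun_eq_iff)
  have h: "h = ?c (case_prod h)" by (auto simp: fun_eq_iff)
  have "pmf (map_pmf ?c (Pi_pmf (I \<times> J) d (\<lambda>_. P))) h = pmf (Pi_pmf (I \<times> J) d (\<lambda>_. P)) (case_prod h)"
    by (subst h, subst pmf_map_inj'[OF inj]) simp
  also have "\<dots> = pmf (Pi_pmf I (\<lambda>_. d) (\<lambda>_. Pi_pmf J d (\<lambda>_. P))) h"
  proof (cases "\<forall>x. x \<notin> I \<times> J \<longrightarrow> case_prod h x = d")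
    case True
    then show ?thesis using assms
      by (auto simp: pmf_Pi prod.cartesian_product split_def fun_eq_iff)
  next
    case False
    then obtain i j where ij: "(i,j) \<notin> I \<times> J" "h i j \<noteq> d" by auto
    show ?thesis
    proof (cases "i \<in> I")
      case True
      with ij have "j \<notin> J" by auto
      then have "pmf (Pi_pmf J d (\<lambda>_. P)) (h i) = 0" using assms ij by (auto simp: pmf_Pi)
      then have "(\<Prod>x\<in>I. pmf (Pi_pmf J d (\<lambda>_. P)) (h x)) = 0"
        using True assms by (intro prod_zero) auto
      moreover have "pmf (Pi_pmf (I \<times> J) d (\<lambda>_. P)) (case_prod h) = 0"
        using False assms by (subst pmf_Pi) (auto simp del: split_paired_All)
      ultimately show ?thesis using assms by (subst pmf_Pi) auto
    next
      case f: False
      then show ?thesis using assms False ij by (auto simp: pmf_Pi fun_eq_iff)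
    qed
  qed
  finally show "pmf (map_pmf ?c (Pi_pmf (I \<times> J) d (\<lambda>_. P))) h = pmf (Pi_pmf I (\<lambda>_. d) (\<lambda>_. Pi_pmf J d (\<lambda>_. P))) h" .
qed


definition item_dist :: "real \<Rightarrow> real \<Rightarrow> (bool \<times> bool) pmf" where
  "item_dist p u = pair_pmf (bernoulli_pmf p) (bernoulli_pmf (1 - u))"

definition row_dist :: "nat \<Rightarrow> real \<Rightarrow> real \<Rightarrow> real \<Rightarrow> ((nat \<Rightarrow> bool \<times> bool) \<times> bool) pmf" where
  "row_dist N p u q = pair_pmf (Pi_pmf {..<N} (False,False) (\<lambda>_. item_dist p u)) (bernoulli_pmf q)"

definition rows_dist :: "nat \<Rightarrow> nat \<Rightarrow> real \<Rightarrow> real \<Rightarrow> real \<Rightarrow> (nat \<Rightarrow> (nat \<Rightarrow> bool \<times> bool) \<times> bool) pmf" where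
  "rows_dist M N p u q = Pi_pmf {..<M} (\<lambda>_. (False,False), False) (\<lambda>_. row_dist N p u q)"

definition to_rows :: "(nat \<times> nat \<Rightarrow> bool) \<times> (nat \<times> nat \<Rightarrow> bool) \<times> (nat \<Rightarrow> bool) \<Rightarrow> nat \<Rightarrow> (nat \<Rightarrow> bool \<times> bool) \<times> bool" where
  "to_rows = (\<lambda>(X,D,W) l. (\<lambda>k. (X (l,k), D (l,k)), W l))"

lemma pair_pair_pmf': "pair_pmf u (pair_pmf v w) = map_pmf (\<lambda>((x, y), z). (x, (y, z))) (pair_pmf (pair_pmf u v) w)"
  by (simp add: pair_pair_pmf map_pmf_comp case_prod_unfold)

lemma gt_dist_rows: "map_pmf to_rows (gt_dist M N p u q) = rows_dist M N p u q"
proof -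
  let ?zXD = "\<lambda>(f::nat\<times>nat\<Rightarrow>bool,g::nat\<times>nat\<Rightarrow>bool) i. (f i, g i)"
  let ?cu = "\<lambda>(X::nat\<times>nat\<Rightarrow>bool\<times>bool) i j. X (i,j)"
  let ?zW = "\<lambda>(f::nat\<Rightarrow>nat\<Rightarrow>bool\<times>bool,g::nat\<Rightarrow>bool) i. (f i, g i)"
  let ?PX = "Pi_pmf ({..<M} \<times> {..<N}) False (\<lambda>_. bernoulli_pmf p)"
  let ?PD = "Pi_pmf ({..<M} \<times> {..<N}) False (\<lambda>_. bernoulli_pmf (1 - u))"
  let ?PW = "Pi_pmf {..<M} False (\<lambda>_. bernoulli_pmf q)"
  have e: "to_rows \<circ> (\<lambda>((x, y), z). (x, (y, z))) = ?zW \<circ> (\<lambda>(a,b). ((?cu \<circ> ?zXD) a, id b))"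
    by (auto simp: to_rows_def fun_eq_iff)
  have "map_pmf to_rows (gt_dist M N p u q) = map_pmf ?zW (map_pmf (\<lambda>(a,b). ((?cu \<circ> ?zXD) a, id b)) (pair_pmf (pair_pmf ?PX ?PD) ?PW))"
    unfolding gt_dist_def pair_pair_pmf' map_pmf_comp
    by (intro map_pmf_cong refl) (auto simp: to_rows_def fun_eq_iff)
  also have "\<dots> = map_pmf ?zW (pair_pmf (map_pmf ?cu (map_pmf ?zXD (pair_pmf ?PX ?PD))) ?PW)"
    by (subst map_pair) (simp add: map_pmf_comp o_def)
  also have "map_pmf ?zXD (pair_pmf ?PX ?PD) = Pi_pmf ({..<M} \<times> {..<N}) (False,False) (\<lambda>_. item_dist p u)"
    unfolding item_dist_def by (rule Pi_pmf_zip) simp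
  also have "map_pmf ?cu \<dots> = Pi_pmf {..<M} (\<lambda>_. (False,False)) (\<lambda>_. Pi_pmf {..<N} (False,False) (\<lambda>_. item_dist p u))"
    by (rule Pi_pmf_curry) simp_all
  also have "map_pmf ?zW (pair_pmf \<dots> ?PW) = rows_dist M N p u q"
    unfolding rows_dist_def row_dist_def by (rule Pi_pmf_zip) simp
  finally show ?thesis .
qed


definition wt :: "nat \<Rightarrow> (nat \<times> nat \<Rightarrow> bool) \<Rightarrow> (nat \<Rightarrow> bool) \<Rightarrow> real \<Rightarrow> nat \<Rightarrow> real" where
  "wt M X Y psi k = (\<Sum>l<M. if X (l,k) then (if Y l then - psi else 1) else 0)"

lemma obj_eq: "lp2_obj M N X Y psi z = (\<Sum>k<N. (1 - z k) * wt M X Y psi k)"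
proof -
  have s1: "{l. l < M \<and> \<not> Y l} = {l\<in>{..<M}. \<not> Y l}" "{l. l < M \<and> Y l} = {l\<in>{..<M}. Y l}" by auto
  have "lp2_obj M N X Y psi z = (\<Sum>l<M. \<Sum>k<N. (if X (l, k) then 1 else 0) * (1 - z k) * (if Y l then - psi else 1))"
    unfolding lp2_obj_def s1 sum.inter_filter[OF finite_lessThan] sum_distrib_left sum_subtractf[symmetric]
    by (intro sum.cong refl) (auto simp: sum_distrib_left sum_negf[symmetric] mult_ac)
  also have "\<dots> = (\<Sum>k<N. (1 - z k) * wt M X Y psi k)"
    unfolding wt_def by (subst sum.swap) (auto simp: sum_distrib_left intro!: sum.cong)
  finally show ?thesis .
qed

lemma sum_upd: fixes g :: "real \<Rightarrow> nat \<Rightarrow> real" shows "finite A \<Longrightarrow> a \<in> A \<Longrightarrow> (\<Sum>k\<in>A. g ((z(a:=x)) k) k) = (\<Sum>k\<in>A. g (z k) k) - g (z a) a + g x a"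
  by (simp add: sum.remove[of A a] sum.cong[of "A - {a}" "A - {a}" "\<lambda>k. g ((z(a:=x)) k) k" "\<lambda>k. g (z k) k"])

lemma success_det:
  fixes t0 :: real
  assumes Sd: "Sd \<subseteq> {..<N}" and t0: "0 \<le> t0"
    and def: "\<forall>d\<in>Sd. wt M X (gt_outcome Sd X D W) psi d < t0"
    and nd: "L \<le> card {k\<in>{..<N} - Sd. t0 < wt M X (gt_outcome Sd X D W) psi k}"
    and L: "1 \<le> L"
  shows "colpal_success M N L Sd psi X D W"
  unfolding colpal_success_def
proof (intro allI impI)
  fix zh T
  let ?Y = "gt_outcome Sd X D W"
  let ?w = "wt M X ?Y psi"
  let ?A = "{k\<in>{..<N} - Sd. t0 < ?w k}"
  assume opt: "lp2_optimal M N L X ?Y psi zh" and top: "top_L N L zh T"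
  from opt have feas: "\<forall>k<N. 0 \<le> zh k \<and> zh k \<le> 1" "(\<Sum>k<N. zh k) \<le> real L"
    and optim: "\<And>z. lp2_feasible N L z \<Longrightarrow> lp2_obj M N X ?Y psi zh \<le> lp2_obj M N X ?Y psi z"
    unfolding lp2_optimal_def lp2_feasible_def by auto
  from top have TN: "T \<subseteq> {..<N}" and cT: "card T = L" and topo: "\<And>i j. i \<in> T \<Longrightarrow> j < N \<Longrightarrow> j \<notin> T \<Longrightarrow> zh j \<le> zh i"
    unfolding top_L_def by auto
  have finT: "finite T" using TN finite_subset by blast
  show "T \<inter> Sd = {}"
  proof (rule ccontr)
    assume "T \<inter> Sd \<noteq> {}"
    then obtain d where dT: "d \<in> T" and dS: "d \<in> Sd" by auto
    have dN: "d < N" using dS Sd by auto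
    have "card (?A \<inter> T) \<le> card (T - {d})"
      by (rule card_mono) (use finT dS in auto)
    also have "\<dots> = L - 1" using cT dT finT by simp
    finally have "card (?A \<inter> T) < card ?A" using nd L by linarith
    then have "?A - T \<noteq> {}"
      by (metis Diff_eq_empty_iff Int_absorb2 nat_less_le)
    then obtain a where aA: "a \<in> ?A" and aT: "a \<notin> T" by auto
    have aN: "a < N" and aS: "a \<notin> Sd" and wa: "t0 < ?w a" using aA by auto
    have wd: "?w d < t0" using def dS by auto
    have ad: "a \<noteq> d" using aT dT by auto
    have zad: "zh a \<le> zh d" using topo[OF dT aN aT] .
    have objz: "\<And>z. lp2_obj M N X ?Y psi z = (\<Sum>k<N. (1 - z k) * ?w k)" by (rule obj_eq)
    consider (one) "zh a = 1" | (zero) "zh d = 0" | (mid) "zh a < 1" "0 < zh d"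
      using feas(1) aN dN by force
    then show False
    proof cases
      case one
      have "\<forall>i\<in>T. 1 \<le> zh i" using topo one aN aT by fastforce
      then have "(\<Sum>k\<in>T. 1) \<le> (\<Sum>k\<in>T. zh k)" by (intro sum_mono) auto
      then have "real L \<le> (\<Sum>k\<in>T. zh k)" using cT by simp
      also have "(\<Sum>k\<in>T. zh k) + zh a = (\<Sum>k\<in>insert a T. zh k)" using aT finT by simp
      also have "\<dots> \<le> (\<Sum>k<N. zh k)"
        by (rule sum_mono2) (use TN aN feas in auto)
      finally show False using one feas by linarith
    next
      case zero
      have zj: "\<And>j. j < N \<Longrightarrow> j \<notin> T \<Longrightarrow> zh j = 0" using topo[OF dT] zero feas by force
      have "(\<Sum>k<N. zh k) = (\<Sum>k\<in>T. zh k)"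
        by (rule sum.mono_neutral_right) (use TN zj in auto)
      also have "\<dots> = (\<Sum>k\<in>T - {d}. zh k)" using zero dT finT by (simp add: sum.remove)
      also have "\<dots> \<le> (\<Sum>k\<in>T - {d}. 1)" by (rule sum_mono) (use TN feas in auto)
      also have "\<dots> = real L - 1" using cT dT finT L by simp
      finally have sl: "(\<Sum>k<N. zh k) \<le> real L - 1" .
      have za: "zh a = 0" using zj aN aT .
      let ?z = "zh(a := 1)"
      have "(\<Sum>k<N. ?z k) = (\<Sum>k<N. zh k) - zh a + 1"
        using sum_upd[of "{..<N}" a "\<lambda>x k. x" zh 1] aN by simp
      then have "lp2_feasible N L ?z"
        unfolding lp2_feasible_def using feas sl za aN by auto
      then have "lp2_obj M N X ?Y psi zh \<le> lp2_obj M N X ?Y psi ?z" by (rule optim)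
      moreover have "lp2_obj M N X ?Y psi ?z = lp2_obj M N X ?Y psi zh - ?w a"
        unfolding objz using aN za sum_upd[of "{..<N}" a "\<lambda>x k. (1 - x) * ?w k" zh 1] by simp
      ultimately show False using wa t0 by linarith
    next
      case mid
      define e where "e = min (zh d) (1 - zh a)"
      have e: "0 < e" "e \<le> zh d" "e \<le> 1 - zh a" using mid by (auto simp: e_def)
      let ?z = "(zh(a := zh a + e))(d := zh d - e)"
      have s: "(\<Sum>k<N. ?z k) = (\<Sum>k<N. zh k)"
        using aN dN ad sum_upd[of "{..<N}" d "\<lambda>x k. x" "zh(a := zh a + e)" "zh d - e"]
          sum_upd[of "{..<N}" a "\<lambda>x k. x" zh "zh a + e"] by simp
      have "lp2_feasible N L ?z"
        unfolding lp2_feasible_def s using feas e aN dN ad by auto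
      then have "lp2_obj M N X ?Y psi zh \<le> lp2_obj M N X ?Y psi ?z" by (rule optim)
      moreover have "lp2_obj M N X ?Y psi ?z = lp2_obj M N X ?Y psi zh - e * ?w a + e * ?w d"
        unfolding objz using aN dN ad sum_upd[of "{..<N}" d "\<lambda>x k. (1 - x) * ?w k" "zh(a := zh a + e)" "zh d - e"]
          sum_upd[of "{..<N}" a "\<lambda>x k. (1 - x) * ?w k" zh "zh a + e"]
        by (simp add: algebra_simps)
      moreover have "e * ?w d < e * ?w a" using e wa wd by simp
      ultimately show False by linarith
    qed
  qed
qed


lemma fin_pmf_finite_type: "finite (set_pmf (P :: ('a::finite) pmf))"
  by (rule finite_subset[OF subset_UNIV]) simp

lemma fin_row: "finite (set_pmf (row_dist N p u q))"
  unfolding row_dist_def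
  by (simp, subst set_Pi_pmf) (auto intro!: finite_PiE_dflt simp: fin_pmf_finite_type)

lemma fin_rows: "finite (set_pmf (rows_dist M N p u q))"
  unfolding rows_dist_def
  by (subst set_Pi_pmf) (auto intro!: finite_PiE_dflt simp: fin_row)

lemma expectation_pair_mult:
  fixes f :: "'a \<Rightarrow> real" and g :: "'b \<Rightarrow> real"
  assumes A: "finite (set_pmf A)" and B: "finite (set_pmf B)"
  shows "measure_pmf.expectation (pair_pmf A B) (\<lambda>x. f (fst x) * g (snd x)) =
         measure_pmf.expectation A f * measure_pmf.expectation B g"
proof -
  have "measure_pmf.expectation (pair_pmf A B) (\<lambda>x. f (fst x) * g (snd x)) =
        (\<Sum>x\<in>set_pmf A \<times> set_pmf B. f (fst x) * g (snd x) * pmf (pair_pmf A B) x)"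
    using A B by (intro integral_measure_pmf_real) auto
  also have "\<dots> = (\<Sum>a\<in>set_pmf A. \<Sum>b\<in>set_pmf B. (f a * pmf A a) * (g b * pmf B b))"
    unfolding sum.cartesian_product by (intro sum.cong) (auto simp: pmf_pair' mult_ac)
  also have "\<dots> = (\<Sum>a\<in>set_pmf A. f a * pmf A a) * (\<Sum>b\<in>set_pmf B. g b * pmf B b)"
    by (simp add: sum_product)
  also have "\<dots> = measure_pmf.expectation A f * measure_pmf.expectation B g"
    using A B by (simp add: integral_measure_pmf_real)
  finally show ?thesis .
qed

lemma expectation_prod_Pi_pmf_subset:
  fixes h :: "'a \<Rightarrow> ('b::finite) \<Rightarrow> real"
  assumes I: "finite I" and AI: "A \<subseteq> I" and nn: "\<And>k y. k \<in> A \<Longrightarrow> 0 \<le> h k y"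
  shows "measure_pmf.expectation (Pi_pmf I d P) (\<lambda>y. \<Prod>k\<in>A. h k (y k)) =
         (\<Prod>k\<in>A. measure_pmf.expectation (P k) (h k))"
proof -
  define h' where "h' k = (if k \<in> A then h k else (\<lambda>_. 1))" for k
  have fA: "finite A" using I AI finite_subset by blast
  have e: "(\<Prod>k\<in>A. h k (y k)) = (\<Prod>k\<in>I. h' k (y k))" for y
  proof -
    have "(\<Prod>k\<in>I. h' k (y k)) = (\<Prod>k\<in>A. h' k (y k))"
      by (rule prod.mono_neutral_right) (use AI I in \<open>auto simp: h'_def\<close>)
    then show ?thesis by (simp add: h'_def)
  qed
  have "measure_pmf.expectation (Pi_pmf I d P) (\<lambda>y. \<Prod>k\<in>I. h' k (y k)) = (\<Prod>k\<in>I. measure_pmf.expectation (P k) (h' k))"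
    using I by (intro expectation_prod_Pi_pmf) (auto simp: h'_def nn integrable_measure_pmf_finite fin_pmf_finite_type)
  also have "\<dots> = (\<Prod>k\<in>A. measure_pmf.expectation (P k) (h' k))"
    by (rule prod.mono_neutral_right) (use AI I in \<open>auto simp: h'_def\<close>)
  also have "\<dots> = (\<Prod>k\<in>A. measure_pmf.expectation (P k) (h k))"
    by (simp add: h'_def)
  finally show ?thesis unfolding e .
qed

lemma row_expectation:
  fixes \<phi> :: "bool \<Rightarrow> real" and h :: "nat \<Rightarrow> bool \<times> bool \<Rightarrow> real"
  assumes AN: "A \<subseteq> {..<N}" and nn: "\<And>k y. k \<in> A \<Longrightarrow> 0 \<le> h k y"
  shows "measure_pmf.expectation (row_dist N p u q) (\<lambda>\<rho>. \<phi> (snd \<rho>) * (\<Prod>k\<in>A. h k (fst \<rho> k))) =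
         measure_pmf.expectation (bernoulli_pmf q) \<phi> * (\<Prod>k\<in>A. measure_pmf.expectation (item_dist p u) (h k))"
proof -
  have "measure_pmf.expectation (row_dist N p u q) (\<lambda>\<rho>. \<phi> (snd \<rho>) * (\<Prod>k\<in>A. h k (fst \<rho> k))) =
        measure_pmf.expectation (row_dist N p u q) (\<lambda>\<rho>. (\<Prod>k\<in>A. h k (fst \<rho> k)) * \<phi> (snd \<rho>))"
    by (simp add: mult.commute)
  also have "\<dots> = measure_pmf.expectation (Pi_pmf {..<N} (False,False) (\<lambda>_. item_dist p u)) (\<lambda>y. \<Prod>k\<in>A. h k (y k))
        * measure_pmf.expectation (bernoulli_pmf q) \<phi>"
    unfolding row_dist_def
    by (rule expectation_pair_mult[where f = "\<lambda>y. \<Prod>k\<in>A. h k (y k)"])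
       (auto simp: set_Pi_pmf fin_pmf_finite_type intro!: finite_PiE_dflt)
  also have "measure_pmf.expectation (Pi_pmf {..<N} (False,False) (\<lambda>_. item_dist p u)) (\<lambda>y. \<Prod>k\<in>A. h k (y k))
     = (\<Prod>k\<in>A. measure_pmf.expectation (item_dist p u) (h k))"
    by (rule expectation_prod_Pi_pmf_subset) (use AN nn in auto)
  finally show ?thesis by simp
qed

lemma rows_expectation_exp_sum:
  fixes g :: "(nat \<Rightarrow> bool \<times> bool) \<times> bool \<Rightarrow> real"
  shows "measure_pmf.expectation (rows_dist M N p u q) (\<lambda>r. exp (\<Sum>l<M. g (r l))) =
         (measure_pmf.expectation (row_dist N p u q) (\<lambda>\<rho>. exp (g \<rho>))) ^ M"
proof -
  have "measure_pmf.expectation (rows_dist M N p u q) (\<lambda>r. \<Prod>l<M. exp (g (r l))) =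
        (\<Prod>l<M. measure_pmf.expectation (row_dist N p u q) (\<lambda>\<rho>. exp (g \<rho>)))"
    unfolding rows_dist_def
    by (rule expectation_prod_Pi_pmf) (auto simp: integrable_measure_pmf_finite fin_row)
  then show ?thesis by (simp add: exp_sum)
qed

lemma markov_pmf:
  fixes g :: "'a \<Rightarrow> real"
  assumes fin: "finite (set_pmf P)"
    and ge: "\<And>x. x \<in> set_pmf P \<Longrightarrow> x \<in> A \<Longrightarrow> 1 \<le> g x"
    and nn: "\<And>x. x \<in> set_pmf P \<Longrightarrow> 0 \<le> g x"
  shows "measure_pmf.prob P A \<le> measure_pmf.expectation P g"
proof -
  have "measure_pmf.prob P A = measure_pmf.expectation P (indicator A)"
    by simp
  also have "\<dots> \<le> measure_pmf.expectation P g"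
    by (intro integral_mono_AE AE_pmfI) (auto simp: integrable_measure_pmf_finite fin indicator_def ge nn)
  finally show ?thesis .
qed

lemma item_expectation:
  assumes "0 \<le> p" "p \<le> 1" "0 \<le> u" "u \<le> 1"
  shows "measure_pmf.expectation (item_dist p u) f =
     f (True,True) * (p * (1-u)) + f (True,False) * (p * u) + f (False,True) * ((1-p)*(1-u)) + f (False,False) * ((1-p)*u)"
proof -
  have "measure_pmf.expectation (item_dist p u) f = (\<Sum>x\<in>UNIV. f x * pmf (item_dist p u) x)"
    by (rule integral_measure_pmf_real) auto
  also have "(UNIV :: (bool\<times>bool) set) = {(True,True),(True,False),(False,True),(False,False)}"
    by auto
  finally show ?thesis using assms
    by (simp add: item_dist_def pmf_pair)
qed


definition rY :: "nat set \<Rightarrow> (nat \<Rightarrow> bool \<times> bool) \<times> bool \<Rightarrow> bool" where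
  "rY Sd \<rho> = ((\<exists>k\<in>Sd. snd (fst \<rho> k) \<and> fst (fst \<rho> k)) \<or> snd \<rho>)"

definition vv :: "real \<Rightarrow> nat set \<Rightarrow> (nat \<Rightarrow> bool \<times> bool) \<times> bool \<Rightarrow> real" where
  "vv psi Sd \<rho> = (if rY Sd \<rho> then - psi else 1)"

definition Tk :: "real \<Rightarrow> nat set \<Rightarrow> nat \<Rightarrow> (nat \<Rightarrow> bool \<times> bool) \<times> bool \<Rightarrow> real" where
  "Tk psi Sd k \<rho> = (if fst (fst \<rho> k) then vv psi Sd \<rho> else 0)"

lemma prod_01: "finite A \<Longrightarrow> (\<Prod>k\<in>A. (if P k then 0 else 1::real)) = (if \<exists>k\<in>A. P k then 0 else 1)"
  by (induct rule: finite_induct) auto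

lemma nY_prod: "finite Sd \<Longrightarrow> (if rY Sd \<rho> then 0 else 1::real) =
   (if snd \<rho> then 0 else 1) * (\<Prod>k\<in>Sd. (\<lambda>(x,d). if d \<and> x then 0 else 1) (fst \<rho> k))"
  by (simp add: rY_def case_prod_unfold prod_01)

lemma integrable_row[simp]: "integrable (row_dist N p u q) (f :: _ \<Rightarrow> real)"
  by (rule integrable_measure_pmf_finite[OF fin_row])

context
  fixes N :: nat and p u q :: real and Sd :: "nat set"
  assumes p: "0 \<le> p" "p \<le> 1" and u: "0 \<le> u" "u \<le> 1" and q: "0 \<le> q" "q \<le> 1"
    and SdN: "Sd \<subseteq> {..<N}"
begin

lemma finSd: "finite Sd" using SdN finite_subset by blast

lemma item_nY: "measure_pmf.expectation (item_dist p u) (\<lambda>(x,d). if d \<and> x then 0 else 1::real) = 1 - p * (1-u)"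
  using p u by (simp add: item_expectation algebra_simps)

lemma E_nY: "measure_pmf.expectation (row_dist N p u q) (\<lambda>\<rho>. if rY Sd \<rho> then 0 else 1::real)
   = (1 - q) * (1 - p * (1-u)) ^ card Sd"
proof -
  have "measure_pmf.expectation (row_dist N p u q) (\<lambda>\<rho>. if rY Sd \<rho> then 0 else 1::real) =
    measure_pmf.expectation (row_dist N p u q) (\<lambda>\<rho>. (\<lambda>w. if w then 0 else 1::real) (snd \<rho>) *
       (\<Prod>k\<in>Sd. (\<lambda>(x,d). if d \<and> x then 0 else 1) (fst \<rho> k)))"
    using finSd by (simp add: nY_prod)
  also have "\<dots> = (1 - q) * (1 - p * (1-u)) ^ card Sd"
    by (subst row_expectation) (use SdN q in \<open>auto simp: item_nY\<close>)
  finally show ?thesis .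
qed

lemma E_x: "k < N \<Longrightarrow> measure_pmf.expectation (row_dist N p u q) (\<lambda>\<rho>. if fst (fst \<rho> k) then 1 else 0::real) = p"
proof -
  assume k: "k < N"
  have "measure_pmf.expectation (row_dist N p u q) (\<lambda>\<rho>. if fst (fst \<rho> k) then 1 else 0::real) =
    measure_pmf.expectation (row_dist N p u q) (\<lambda>\<rho>. (\<lambda>w. 1::real) (snd \<rho>) *
       (\<Prod>k\<in>{k}. (\<lambda>(x,d). if x then 1 else 0) (fst \<rho> k)))"
    by (simp add: case_prod_unfold)
  also have "\<dots> = p"
    by (subst row_expectation) (use k q p u in \<open>auto simp: item_expectation algebra_simps\<close>)
  finally show ?thesis .
qed

lemma E_xnY: assumes d: "d \<in> Sd"
  shows "measure_pmf.expectation (row_dist N p u q) (\<lambda>\<rho>. if fst (fst \<rho> d) \<and> \<not> rY Sd \<rho> then 1 else 0::real)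
   = (1 - q) * (p * u) * (1 - p * (1-u)) ^ (card Sd - 1)"
proof -
  define h where "h k = (if k = d then (\<lambda>(x,dd). if x \<and> \<not> dd then 1 else 0)
                         else (\<lambda>(x,dd). if dd \<and> x then 0 else 1::real))" for k
  have pw: "(if fst (fst \<rho> d) \<and> \<not> rY Sd \<rho> then 1 else 0::real) =
     (\<lambda>w. if w then 0 else 1::real) (snd \<rho>) * (\<Prod>k\<in>Sd. h k (fst \<rho> k))" for \<rho>
  proof -
    have "(\<Prod>k\<in>Sd. h k (fst \<rho> k)) = h d (fst \<rho> d) * (\<Prod>k\<in>Sd - {d}. h k (fst \<rho> k))"
      using finSd d by (simp add: prod.remove)
    also have "(\<Prod>k\<in>Sd - {d}. h k (fst \<rho> k)) = (\<Prod>k\<in>Sd - {d}. (if snd (fst \<rho> k) \<and> fst (fst \<rho> k) then 0 else 1))"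
      by (intro prod.cong) (auto simp: h_def case_prod_unfold)
    also have "\<dots> = (if \<exists>k\<in>Sd - {d}. snd (fst \<rho> k) \<and> fst (fst \<rho> k) then 0 else 1)"
      using finSd by (simp add: prod_01)
    finally show ?thesis using d by (auto simp: h_def case_prod_unfold rY_def)
  qed
  have "measure_pmf.expectation (row_dist N p u q) (\<lambda>\<rho>. if fst (fst \<rho> d) \<and> \<not> rY Sd \<rho> then 1 else 0::real) =
     measure_pmf.expectation (row_dist N p u q) (\<lambda>\<rho>. (\<lambda>w. if w then 0 else 1::real) (snd \<rho>) * (\<Prod>k\<in>Sd. h k (fst \<rho> k)))"
    by (simp only: pw)
  also have "\<dots> = (1 - q) * (\<Prod>k\<in>Sd. measure_pmf.expectation (item_dist p u) (h k))"
    by (subst row_expectation) (use SdN q in \<open>auto simp: h_def\<close>)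
  also have "(\<Prod>k\<in>Sd. measure_pmf.expectation (item_dist p u) (h k)) =
      measure_pmf.expectation (item_dist p u) (h d) * (\<Prod>k\<in>Sd - {d}. measure_pmf.expectation (item_dist p u) (h k))"
    using finSd d by (simp add: prod.remove)
  also have "(\<Prod>k\<in>Sd - {d}. measure_pmf.expectation (item_dist p u) (h k)) = (1 - p * (1-u)) ^ (card Sd - 1)"
    using finSd d by (simp add: h_def item_nY)
  also have "measure_pmf.expectation (item_dist p u) (h d) = p * u"
    using p u by (simp add: h_def item_expectation)
  finally show ?thesis by simp
qed

lemma E_S: assumes S: "S \<subseteq> {..<N}" and c: "0 \<le> c"
  shows "measure_pmf.expectation (row_dist N p u q) (\<lambda>\<rho>. \<Prod>k\<in>S. if fst (fst \<rho> k) then c else 1)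
     = (1 - p + p * c) ^ card S"
proof -
  have "measure_pmf.expectation (row_dist N p u q) (\<lambda>\<rho>. \<Prod>k\<in>S. if fst (fst \<rho> k) then c else 1) =
    measure_pmf.expectation (row_dist N p u q) (\<lambda>\<rho>. (\<lambda>w. 1::real) (snd \<rho>) *
       (\<Prod>k\<in>S. (\<lambda>(x,d). if x then c else 1) (fst \<rho> k)))"
    by (simp add: case_prod_unfold)
  also have "\<dots> = (1 - p + p * c) ^ card S"
    by (subst row_expectation) (use S q p u c in \<open>auto simp: item_expectation algebra_simps\<close>)
  finally show ?thesis .
qed

lemma E_nY_S: assumes S: "S \<subseteq> {..<N}" "S \<inter> Sd = {}" and c: "0 \<le> c"
  shows "measure_pmf.expectation (row_dist N p u q) (\<lambda>\<rho>. (if rY Sd \<rho> then 0 else 1) * (\<Prod>k\<in>S. if fst (fst \<rho> k) then c else 1))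
     = (1 - q) * (1 - p * (1-u)) ^ card Sd * (1 - p + p * c) ^ card S"
proof -
  define h where "h k = (if k \<in> Sd then (\<lambda>(x,d). if d \<and> x then 0 else 1)
                         else (\<lambda>(x,d). if x then c else 1::real))" for k
  have fS: "finite S" using S finite_subset by blast
  have pw: "(if rY Sd \<rho> then 0 else 1) * (\<Prod>k\<in>S. if fst (fst \<rho> k) then c else 1) =
     (\<lambda>w. if w then 0 else 1::real) (snd \<rho>) * (\<Prod>k\<in>Sd \<union> S. h k (fst \<rho> k))" for \<rho>
  proof -
    have "(\<Prod>k\<in>Sd \<union> S. h k (fst \<rho> k)) = (\<Prod>k\<in>Sd. h k (fst \<rho> k)) * (\<Prod>k\<in>S. h k (fst \<rho> k))"
      by (rule prod.union_disjoint) (use finSd fS S in auto)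
    also have "(\<Prod>k\<in>Sd. h k (fst \<rho> k)) = (\<Prod>k\<in>Sd. (\<lambda>(x,d). if d \<and> x then 0 else 1) (fst \<rho> k))"
      by (intro prod.cong) (auto simp: h_def)
    also have "(\<Prod>k\<in>S. h k (fst \<rho> k)) = (\<Prod>k\<in>S. if fst (fst \<rho> k) then c else 1)"
      using S by (intro prod.cong) (auto simp: h_def case_prod_unfold)
    finally show ?thesis using finSd by (simp add: nY_prod)
  qed
  have "measure_pmf.expectation (row_dist N p u q) (\<lambda>\<rho>. (if rY Sd \<rho> then 0 else 1) * (\<Prod>k\<in>S. if fst (fst \<rho> k) then c else 1)) =
     measure_pmf.expectation (row_dist N p u q) (\<lambda>\<rho>. (\<lambda>w. if w then 0 else 1::real) (snd \<rho>) * (\<Prod>k\<in>Sd \<union> S. h k (fst \<rho> k)))"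
    by (simp only: pw)
  also have "\<dots> = (1 - q) * (\<Prod>k\<in>Sd \<union> S. measure_pmf.expectation (item_dist p u) (h k))"
    by (subst row_expectation) (use SdN S q c in \<open>auto simp: h_def\<close>)
  also have "(\<Prod>k\<in>Sd \<union> S. measure_pmf.expectation (item_dist p u) (h k)) =
     (\<Prod>k\<in>Sd. measure_pmf.expectation (item_dist p u) (h k)) * (\<Prod>k\<in>S. measure_pmf.expectation (item_dist p u) (h k))"
    by (rule prod.union_disjoint) (use finSd fS S in auto)
  also have "(\<Prod>k\<in>Sd. measure_pmf.expectation (item_dist p u) (h k)) = (1 - p * (1-u)) ^ card Sd"
    by (simp add: h_def item_nY)
  also have "(\<Prod>k\<in>S. measure_pmf.expectation (item_dist p u) (h k)) = (1 - p + p * c) ^ card S"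
    using S p u by (simp add: h_def item_expectation algebra_simps disjoint_iff)
  finally show ?thesis by simp
qed


lemma E_G: "measure_pmf.expectation (row_dist N p u q) (\<lambda>\<rho>. exp (- \<theta> * vv psi Sd \<rho>))
   = exp (\<theta> * psi) + (exp (- \<theta>) - exp (\<theta> * psi)) * ((1 - q) * (1 - p * (1-u)) ^ card Sd)"
proof -
  have pw: "(\<lambda>\<rho>. exp (- \<theta> * vv psi Sd \<rho>)) = (\<lambda>\<rho>. exp (\<theta> * psi) + (exp (- \<theta>) - exp (\<theta> * psi)) * (if rY Sd \<rho> then 0 else 1))"
    by (auto simp: fun_eq_iff vv_def)
  show ?thesis unfolding pw by (simp add: E_nY)
qed

lemma E_D: assumes d: "d \<in> Sd"
  shows "measure_pmf.expectation (row_dist N p u q) (\<lambda>\<rho>. exp (lam * Tk psi Sd d \<rho>))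
   = 1 + (exp (- lam * psi) - 1) * p + (exp lam - exp (- lam * psi)) * ((1 - q) * (p * u) * (1 - p * (1-u)) ^ (card Sd - 1))"
proof -
  have dN: "d < N" using d SdN by auto
  have pw: "(\<lambda>\<rho>. exp (lam * Tk psi Sd d \<rho>)) = (\<lambda>\<rho>. 1 + (exp (- lam * psi) - 1) * (if fst (fst \<rho> d) then 1 else 0)
       + (exp lam - exp (- lam * psi)) * (if fst (fst \<rho> d) \<and> \<not> rY Sd \<rho> then 1 else 0))"
    by (auto simp: fun_eq_iff vv_def Tk_def)
  show ?thesis unfolding pw by (simp add: E_x[OF dN] E_xnY[OF d])
qed

lemma E_Srow: assumes S: "S \<subseteq> {..<N}" "S \<inter> Sd = {}" and lam: "0 \<le> lam"
  shows "measure_pmf.expectation (row_dist N p u q) (\<lambda>\<rho>. exp (\<mu> * vv psi Sd \<rho> - lam * (\<Sum>k\<in>S. Tk psi Sd k \<rho>)))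
   = exp (- \<mu> * psi) * (1 - p + p * exp (lam * psi)) ^ card S
     + ((1 - q) * (1 - p * (1-u)) ^ card Sd) * (exp \<mu> * (1 - p + p * exp (- lam)) ^ card S
         - exp (- \<mu> * psi) * (1 - p + p * exp (lam * psi)) ^ card S)"
proof -
  let ?Pp = "\<lambda>\<rho>. \<Prod>k\<in>S. if fst (fst \<rho> k) then exp (lam * psi) else 1"
  let ?Pm = "\<lambda>\<rho>. \<Prod>k\<in>S. if fst (fst \<rho> k) then exp (- lam) else 1"
  let ?I = "\<lambda>\<rho>. if rY Sd \<rho> then 0 else 1::real"
  have pw: "(\<lambda>\<rho>. exp (\<mu> * vv psi Sd \<rho> - lam * (\<Sum>k\<in>S. Tk psi Sd k \<rho>))) =
     (\<lambda>\<rho>. exp (- \<mu> * psi) * ?Pp \<rho> + exp \<mu> * (?I \<rho> * ?Pm \<rho>) - exp (- \<mu> * psi) * (?I \<rho> * ?Pp \<rho>))"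
  proof
    fix \<rho>
    have "exp (\<mu> * vv psi Sd \<rho> - lam * (\<Sum>k\<in>S. Tk psi Sd k \<rho>)) =
          exp (\<mu> * vv psi Sd \<rho>) * (\<Prod>k\<in>S. exp (- lam * Tk psi Sd k \<rho>))"
    proof -
      have e: "\<mu> * vv psi Sd \<rho> - lam * (\<Sum>k\<in>S. Tk psi Sd k \<rho>) = \<mu> * vv psi Sd \<rho> + (\<Sum>k\<in>S. - lam * Tk psi Sd k \<rho>)"
        by (simp add: sum_distrib_left sum_negf)
      have fS: "finite S" using S(1) finite_subset by blast
      show ?thesis by (simp only: e exp_add exp_sum[OF fS])
    qed
    also have "\<dots> = exp (- \<mu> * psi) * ?Pp \<rho> + exp \<mu> * (?I \<rho> * ?Pm \<rho>) - exp (- \<mu> * psi) * (?I \<rho> * ?Pp \<rho>)"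
      by (cases "rY Sd \<rho>") (auto simp: vv_def Tk_def intro!: prod.cong)
    finally show "exp (\<mu> * vv psi Sd \<rho> - lam * (\<Sum>k\<in>S. Tk psi Sd k \<rho>)) =
       exp (- \<mu> * psi) * ?Pp \<rho> + exp \<mu> * (?I \<rho> * ?Pm \<rho>) - exp (- \<mu> * psi) * (?I \<rho> * ?Pp \<rho>)" .
  qed
  show ?thesis unfolding pw
    by (simp add: E_S[OF S(1)] E_nY_S[OF S] algebra_simps)
qed

end


lemma exp_neg_quad: "0 \<le> (x::real) \<Longrightarrow> exp (- x) \<le> 1 - x + x^2"
proof -
  assume x: "0 \<le> x"
  have "1 + x \<le> exp x" by simp
  have pos: "0 < 1 + x" using x by simp
  have "1 \<le> (1 + x) * (1 - x + x^2)" using x by (simp add: algebra_simps power2_eq_square power3_eq_cube[symmetric] )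
  then have "1 / (1 + x) \<le> 1 - x + x^2" using pos by (simp add: field_simps)
  moreover have "exp (- x) \<le> 1 / (1 + x)"
    using \<open>1 + x \<le> exp x\<close> pos by (simp add: exp_minus field_simps)
  ultimately show ?thesis by linarith
qed

lemma exp_pos_quad: "0 \<le> (x::real) \<Longrightarrow> x \<le> 1 \<Longrightarrow> exp x \<le> 1 + x + x^2"
  by (rule exp_bound)

lemma bound_G:
  fixes G psi th :: real
  assumes G: "0 \<le> G" "G \<le> 1" and psi: "0 \<le> psi" "psi \<le> 1" and th: "0 \<le> th" "th \<le> 1"
  shows "exp (th * psi) + (exp (- th) - exp (th * psi)) * G \<le> exp (- th * (G - (1 - G) * psi) + th^2)"
proof -
  have e1: "exp (- th) \<le> 1 - th + th^2" by (rule exp_neg_quad) (use th in auto)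
  have e2: "exp (th * psi) \<le> 1 + th * psi + (th * psi)^2"
    using th psi by (intro exp_bound) (auto simp: mult_le_one)
  have e3: "(th * psi)^2 \<le> th^2" by (intro power_mono) (use th psi in \<open>auto simp: mult_left_le\<close>)
  have "exp (th * psi) + (exp (- th) - exp (th * psi)) * G = G * exp (- th) + (1 - G) * exp (th * psi)"
    by (simp add: algebra_simps)
  also have "\<dots> \<le> G * (1 - th + th^2) + (1 - G) * (1 + th * psi + th^2)"
    using G e1 e2 e3 by (intro add_mono mult_left_mono) auto
  also have "\<dots> = 1 + (- th * (G - (1 - G) * psi) + th^2)" by (simp add: algebra_simps)
  also have "\<dots> \<le> exp (- th * (G - (1 - G) * psi) + th^2)" by (rule exp_ge_add_one_self)
  finally show ?thesis .
qed

lemma bound_D: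
  fixes s psi lam p :: real
  assumes s: "0 \<le> s" "s \<le> 1" and psi: "0 \<le> psi" "psi \<le> 1" and lam: "0 \<le> lam" "lam \<le> 1"
    and p: "0 \<le> p"
  shows "1 + (exp (- lam * psi) - 1) * p + (exp lam - exp (- lam * psi)) * (p * s)
     \<le> exp (p * (lam * (s - (1 - s) * psi) + lam^2))"
proof -
  have e1: "exp (- (lam * psi)) \<le> 1 - lam * psi + (lam * psi)^2"
    using lam psi by (intro exp_neg_quad) auto
  have e2: "exp lam \<le> 1 + lam + lam^2" using lam by (intro exp_bound) auto
  have e3: "(lam * psi)^2 \<le> lam^2" by (intro power_mono) (use lam psi in \<open>auto simp: mult_left_le\<close>)
  have "(1 - s) * exp (- (lam * psi)) + s * exp lam - 1 \<le> (1 - s) * (1 - lam * psi + lam^2) + s * (1 + lam + lam^2) - 1"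
    using s e1 e2 e3 by (intro diff_right_mono add_mono mult_left_mono) auto
  also have "\<dots> = lam * (s - (1 - s) * psi) + lam^2" by (simp add: algebra_simps)
  finally have k: "(1 - s) * exp (- (lam * psi)) + s * exp lam - 1 \<le> lam * (s - (1 - s) * psi) + lam^2" .
  have "1 + (exp (- lam * psi) - 1) * p + (exp lam - exp (- lam * psi)) * (p * s)
      = 1 + p * ((1 - s) * exp (- (lam * psi)) + s * exp lam - 1)" by (simp add: algebra_simps)
  also have "\<dots> \<le> 1 + p * (lam * (s - (1 - s) * psi) + lam^2)"
    using k p by (intro add_left_mono mult_left_mono) auto
  also have "\<dots> \<le> exp (p * (lam * (s - (1 - s) * psi) + lam^2))" by (rule exp_ge_add_one_self)
  finally show ?thesis .
qed

lemma bound_S: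
  fixes G psi lam p :: real and m :: nat
  assumes G: "0 \<le> G" "G \<le> 1" and psi: "0 \<le> psi" "psi \<le> 1" and lam: "0 \<le> lam" "lam \<le> 1"
    and p: "0 \<le> p" "p \<le> 1"
  shows "exp (- (m * p * lam) * psi) * (1 - p + p * exp (lam * psi)) ^ m
     + G * (exp (m * p * lam) * (1 - p + p * exp (- lam)) ^ m
         - exp (- (m * p * lam) * psi) * (1 - p + p * exp (lam * psi)) ^ m) \<le> exp (m * p * lam^2)"
proof -
  let ?X = "exp (- (m * p * lam) * psi) * (1 - p + p * exp (lam * psi)) ^ m"
  let ?Y = "exp (m * p * lam) * (1 - p + p * exp (- lam)) ^ m"
  have A1: "1 - p + p * exp (- lam) \<le> exp (p * (- lam + lam^2))"
  proof -
    have "exp (- lam) \<le> 1 - lam + lam^2" using lam by (intro exp_neg_quad) auto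
    then have "p * (exp (- lam) - 1) \<le> p * (- lam + lam^2)"
      using p by (intro mult_left_mono) auto
    then have "1 - p + p * exp (- lam) \<le> 1 + p * (- lam + lam^2)"
      by (simp add: algebra_simps)
    also have "\<dots> \<le> exp (p * (- lam + lam^2))" by (rule exp_ge_add_one_self)
    finally show ?thesis .
  qed
  have A2: "1 - p + p * exp (lam * psi) \<le> exp (p * (lam * psi + lam^2))"
  proof -
    have "exp (lam * psi) \<le> 1 + lam * psi + (lam * psi)^2"
      using lam psi by (intro exp_bound) (auto simp: mult_le_one)
    moreover have "(lam * psi)^2 \<le> lam^2" by (intro power_mono) (use lam psi in \<open>auto simp: mult_left_le\<close>)
    ultimately have "exp (lam * psi) \<le> 1 + lam * psi + lam^2" by linarith
    then have "p * (exp (lam * psi) - 1) \<le> p * (lam * psi + lam^2)"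
      using p by (intro mult_left_mono) auto
    then have "1 - p + p * exp (lam * psi) \<le> 1 + p * (lam * psi + lam^2)"
      by (simp add: algebra_simps)
    also have "\<dots> \<le> exp (p * (lam * psi + lam^2))" by (rule exp_ge_add_one_self)
    finally show ?thesis .
  qed
  have n1: "0 \<le> 1 - p + p * exp (- lam)" using p by (intro add_nonneg_nonneg) auto
  have n2: "0 \<le> 1 - p + p * exp (lam * psi)" using p by (intro add_nonneg_nonneg) auto
  have "(1 - p + p * exp (- lam)) ^ m \<le> exp (p * (- lam + lam^2)) ^ m"
    using A1 n1 by (rule power_mono)
  then have "?Y \<le> exp (m * p * lam) * exp (p * (- lam + lam^2)) ^ m"
    by (intro mult_left_mono) auto
  also have "\<dots> = exp (m * p * lam^2)"
    by (simp add: exp_of_nat_mult[symmetric] exp_add[symmetric] algebra_simps)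
  finally have Y: "?Y \<le> exp (m * p * lam^2)" .
  have "(1 - p + p * exp (lam * psi)) ^ m \<le> exp (p * (lam * psi + lam^2)) ^ m"
    using A2 n2 by (rule power_mono)
  then have "?X \<le> exp (- (m * p * lam) * psi) * exp (p * (lam * psi + lam^2)) ^ m"
    by (intro mult_left_mono) auto
  also have "\<dots> = exp (m * p * lam^2)"
    by (simp add: exp_of_nat_mult[symmetric] exp_add[symmetric] algebra_simps)
  finally have X: "?X \<le> exp (m * p * lam^2)" .
  have "?X + G * (?Y - ?X) = (1 - G) * ?X + G * ?Y" by (simp add: algebra_simps)
  also have "\<dots> \<le> (1 - G) * exp (m * p * lam^2) + G * exp (m * p * lam^2)"
    using G X Y by (intro add_mono mult_left_mono) auto
  also have "\<dots> = exp (m * p * lam^2)" by (simp add: algebra_simps)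
  finally show ?thesis .
qed


locale gts =
  fixes N L M :: nat and Sd :: "nat set" and u q :: real
  assumes SdN: "Sd \<subseteq> {..<N}" and K1: "1 < card Sd" and L1: "1 \<le> L" and LN: "L \<le> N - card Sd"
    and u: "0 \<le> u" "u < 1/2" and q: "0 \<le> q" "q < 1/2"
begin

abbreviation "K \<equiv> card Sd"
definition "p = 1 / ((1 - u) * real K)"
definition "a = 1 - (1 - u) * p"
definition "Gam = (1 - q) * a ^ K"
definition "g0 = u / a"
definition "psi = min (g0 * Gam / (1 - g0 * Gam)) (Gam / (2 * (1 - Gam)))"
definition "s = g0 * Gam"
definition "del = (1 - g0) * Gam"
definition "nd = s - (1 - s) * psi"
definition "tau = nd + del / 4"
definition "t0 = M * p * tau"
definition "V0 = M * (tau + del / 8)"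
definition "E0 = M * p * del^2 / 256"

lemma K2: "2 \<le> real K" using K1 by simp
lemma a_eq: "a = 1 - 1 / real K"
  using u K1 by (simp add: a_def p_def field_simps)
lemma p_pos: "0 < p" using u K1 by (simp add: p_def)
lemma p_le1: "p \<le> 1"
proof -
  have "(1/2) * 2 \<le> (1 - u) * real K" by (intro mult_mono) (use u K2 in auto)
  then have "1 \<le> (1 - u) * real K" by simp
  then show ?thesis by (simp add: p_def)
qed
lemma a_bounds: "1/2 \<le> a" "a < 1" using K2 by (auto simp: a_eq field_simps)

lemma aK_upper: "a ^ K \<le> 1/2"
proof -
  have "a \<le> exp (- 1 / real K)" unfolding a_eq using exp_ge_add_one_self[of "- 1 / real K"] by simp
  then have "a ^ K \<le> exp (- 1 / real K) ^ K" using a_bounds by (intro power_mono) auto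
  also have "\<dots> = exp (- 1)" using K1 by (simp add: exp_of_nat_mult[symmetric])
  also have "\<dots> \<le> 1/2"
  proof -
    have "2 \<le> exp (1::real)" using exp_ge_add_one_self[of 1] by simp
    then show ?thesis by (simp add: exp_minus field_simps)
  qed
  finally show ?thesis .
qed

lemma aK_lower: "1/9 \<le> a ^ K"
proof -
  have x: "0 \<le> 1 / real K" "1 / real K \<le> 1/2" using K2 by auto
  have "- (1 / real K) - 2 * (1 / real K)^2 \<le> ln a"
    unfolding a_eq by (rule ln_one_minus_pos_lower_bound[OF x])
  then have "real K * (- (1 / real K) - 2 * (1 / real K)^2) \<le> real K * ln a"
    by (intro mult_left_mono) auto
  moreover have "real K * (- (1 / real K) - 2 * (1 / real K)^2) = -1 - 2 / real K"
    using K2 by (simp add: field_simps power2_eq_square)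
  moreover have "-1 - 2 / real K \<ge> -2" using K2 by (simp add: field_simps)
  ultimately have "-2 \<le> real K * ln a" by linarith
  then have "exp (-2) \<le> exp (real K * ln a)" by simp
  also have "exp (real K * ln a) = a ^ K"
    using a_bounds by (simp add: exp_of_nat_mult)
  finally have e: "exp (-2) \<le> a ^ K" .
  have "exp (2::real) \<le> 9"
  proof -
    have "exp (2::real) = exp 1 * exp 1" by (simp add: exp_add[symmetric])
    also have "\<dots> \<le> 3 * 3" using exp_le by (intro mult_mono) auto
    finally show ?thesis by simp
  qed
  then have "1/9 \<le> exp (-2::real)" by (simp add: exp_minus field_simps)
  with e show ?thesis by linarith
qed

lemma Gam_bounds: "1/18 \<le> Gam" "Gam \<le> 1/2"
proof -
  have "(1/2) * (1/9) \<le> (1 - q) * a ^ K" using aK_lower q by (intro mult_mono) auto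
  then show "1/18 \<le> Gam" unfolding Gam_def by simp
  have "(1 - q) * a ^ K \<le> 1 * (1/2)" using aK_upper q a_bounds by (intro mult_mono) auto
  then show "Gam \<le> 1/2" unfolding Gam_def by simp
qed

lemma g0_bounds: "0 \<le> g0" "g0 < 1" using u a_bounds by (auto simp: g0_def field_simps)

lemma s_bounds: "0 \<le> s" "s \<le> Gam" "s < 1"
proof -
  show "0 \<le> s" using g0_bounds Gam_bounds by (simp add: s_def)
  show "s \<le> Gam" unfolding s_def using g0_bounds Gam_bounds mult_right_mono[of g0 1 Gam] by simp
  then show "s < 1" using Gam_bounds by simp
qed

lemma s_eq: "(1 - q) * (p * u) * (1 - p * (1 - u)) ^ (K - 1) = p * s"
proof -
  have aK: "a ^ K = a * a ^ (K - 1)" using K1 by (metis Suc_diff_1 less_trans zero_less_one power_Suc)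
  have b: "1 - p * (1 - u) = a" by (simp add: a_def mult.commute)
  have "a \<noteq> 0" using a_bounds by simp
  then have "p * (u / a * ((1 - q) * (a * a ^ (K - 1)))) = (1 - q) * (p * u) * a ^ (K - 1)"
    by (simp add: field_simps)
  then show ?thesis unfolding s_def g0_def Gam_def b aK by (rule sym)
qed

lemma psi_bounds: "0 \<le> psi" "psi \<le> 1/2" "psi \<le> 1" "(1 - s) * psi \<le> s"
proof -
  have c1: "0 \<le> g0 * Gam / (1 - g0 * Gam)" using s_bounds by (simp add: s_def[symmetric])
  have c2: "0 \<le> Gam / (2 * (1 - Gam))" using Gam_bounds by simp
  show "0 \<le> psi" using c1 c2 by (simp add: psi_def)
  have "Gam / (2 * (1 - Gam)) \<le> 1/2" using Gam_bounds by (simp add: field_simps)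
  moreover have "psi \<le> Gam / (2 * (1 - Gam))" unfolding psi_def by (rule min.cobounded2)
  ultimately show "psi \<le> 1/2" by linarith
  then show "psi \<le> 1" by simp
  have "psi \<le> s / (1 - s)" unfolding psi_def s_def by (rule min.cobounded1)
  then show "(1 - s) * psi \<le> s" using s_bounds by (simp add: field_simps)
qed

lemma del_bounds: "0 < del" "del \<le> 1" "(1 - g0) / 18 \<le> del"
proof -
  have g: "0 < 1 - g0" "1 - g0 \<le> 1" using g0_bounds by auto
  show "0 < del" unfolding del_def using g Gam_bounds by (intro mult_pos_pos) auto
  show "del \<le> 1" unfolding del_def using g Gam_bounds by (intro mult_le_one) auto
  have "(1 - g0) * (1/18) \<le> (1 - g0) * Gam" using g Gam_bounds by (intro mult_left_mono) auto
  then show "(1 - g0) / 18 \<le> del" by (simp add: del_def)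
qed

lemma nd_nonneg: "0 \<le> nd" using psi_bounds(4) unfolding nd_def by linarith

lemma nn_gap: "nd + del \<le> Gam - (1 - Gam) * psi"
proof -
  have "Gam - (1 - Gam) * psi - nd = (Gam - s) * (1 + psi)" by (simp add: nd_def algebra_simps)
  also have "Gam - s = del" by (simp add: s_def del_def algebra_simps)
  finally have "Gam - (1 - Gam) * psi - nd = del * (1 + psi)" .
  moreover have "del * 1 \<le> del * (1 + psi)" using del_bounds(1) psi_bounds(1) by (intro mult_left_mono) auto
  ultimately show ?thesis by linarith
qed

lemma tau_nonneg: "0 \<le> tau" using nd_nonneg del_bounds(1) unfolding tau_def by linarith
lemma t0_nonneg: "0 \<le> t0" unfolding t0_def using p_pos tau_nonneg by (intro mult_nonneg_nonneg) auto

end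


lemma rY_to_rows: "rY Sd (to_rows (X,D,W) l) = gt_outcome Sd X D W l"
  by (simp add: rY_def to_rows_def gt_outcome_def)
lemma fst_to_rows: "fst (fst (to_rows (X,D,W) l) k) = X (l,k)"
  by (simp add: to_rows_def)

context gts begin

definition "wr k r = (\<Sum>l<M. Tk psi Sd k (r l))"
definition "Vs r = (\<Sum>l<M. vv psi Sd (r l))"
definition "goodr r \<longleftrightarrow> (\<forall>d\<in>Sd. wr d r < t0) \<and> L \<le> card {k\<in>{..<N} - Sd. t0 < wr k r}"
definition "mm = N - K - (L - 1)"
definition "Sets = {S. S \<subseteq> {..<N} - Sd \<and> card S = mm}"

lemma wr_to_rows: "wr k (to_rows (X,D,W)) = wt M X (gt_outcome Sd X D W) psi k"
  unfolding wr_def wt_def Tk_def vv_def rY_to_rows fst_to_rows ..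

lemma success_ge:
  "measure_pmf.prob (rows_dist M N p u q) {r. goodr r} \<le>
   measure_pmf.prob (gt_dist M N p u q) {(X, D, W). colpal_success M N L Sd psi X D W}"
proof -
  have "measure_pmf.prob (rows_dist M N p u q) {r. goodr r} = measure_pmf.prob (gt_dist M N p u q) (to_rows -` {r. goodr r})"
    by (simp flip: gt_dist_rows)
  also have "\<dots> \<le> measure_pmf.prob (gt_dist M N p u q) {(X, D, W). colpal_success M N L Sd psi X D W}"
  proof (rule measure_pmf.finite_measure_mono)
    show "to_rows -` {r. goodr r} \<subseteq> {(X, D, W). colpal_success M N L Sd psi X D W}"
    proof
      fix w assume w: "w \<in> to_rows -` {r. goodr r}"
      obtain X D W where wX: "w = (X, D, W)" by (cases w) auto
      have g: "goodr (to_rows (X, D, W))" using w wX by simp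
      have "colpal_success M N L Sd psi X D W"
        by (rule success_det[OF SdN t0_nonneg _ _ L1]) (use g in \<open>auto simp: goodr_def wr_to_rows\<close>)
      then show "w \<in> {(X, D, W). colpal_success M N L Sd psi X D W}" using wX by simp
    qed
  qed simp
  finally show ?thesis .
qed

lemma Nd_card: "card ({..<N} - Sd) = N - K" and Nd_fin: "finite ({..<N} - Sd)"
  using SdN by (auto simp: card_Diff_subset finite_subset)

lemma bad_subset: "\<not> goodr r \<Longrightarrow>
  r \<in> {r. Vs r < V0} \<union> (\<Union>d\<in>Sd. {r. t0 \<le> wr d r}) \<union> (\<Union>S\<in>Sets. {r. V0 \<le> Vs r \<and> (\<forall>k\<in>S. wr k r \<le> t0)})"
proof -
  assume ng: "\<not> goodr r"
  show ?thesis
  proof (cases "\<exists>d\<in>Sd. t0 \<le> wr d r")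
    case True then show ?thesis by auto
  next
    case False
    then have lt: "card {k\<in>{..<N} - Sd. t0 < wr k r} < L" using ng by (auto simp: goodr_def not_le)
    let ?B = "{k\<in>{..<N} - Sd. wr k r \<le> t0}"
    have eqN: "{..<N} - Sd = {k\<in>{..<N} - Sd. t0 < wr k r} \<union> ?B" by auto
    have "card ({..<N} - Sd) = card ({k\<in>{..<N} - Sd. t0 < wr k r} \<union> ?B)" by (rule arg_cong[OF eqN])
    also have "\<dots> = card {k\<in>{..<N} - Sd. t0 < wr k r} + card ?B"
      by (rule card_Un_disjoint) (use Nd_fin in auto)
    finally have "card ({..<N} - Sd) = card {k\<in>{..<N} - Sd. t0 < wr k r} + card ?B" .
    then have "mm \<le> card ?B" using lt Nd_card L1 by (simp add: mm_def)
    then obtain S where S: "S \<subseteq> ?B" "card S = mm" by (rule obtain_subset_with_card_n)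
    then have SS: "S \<in> Sets" by (auto simp: Sets_def)
    show ?thesis
    proof (cases "Vs r < V0")
      case True then show ?thesis by auto
    next
      case False then show ?thesis using S SS by (auto simp: not_less)
    qed
  qed
qed

lemma pow_exp_le: "0 \<le> (E::real) \<Longrightarrow> E \<le> exp x \<Longrightarrow> E ^ n \<le> exp (real n * x)"
  by (metis exp_of_nat_mult power_mono)

lemma prob_G: "measure_pmf.prob (rows_dist M N p u q) {r. Vs r < V0} \<le> exp (- E0)"
proof -
  define th where "th = del / 16"
  have th: "0 \<le> th" "th \<le> 1" using del_bounds by (auto simp: th_def)
  have "measure_pmf.prob (rows_dist M N p u q) {r. Vs r < V0} \<le>
        measure_pmf.expectation (rows_dist M N p u q) (\<lambda>r. exp (th * V0) * exp (\<Sum>l<M. - th * vv psi Sd (r l)))"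
  proof (rule markov_pmf[OF fin_rows])
    fix r assume "r \<in> {r. Vs r < V0}"
    then have "0 \<le> th * (V0 - Vs r)" using th by simp
    also have "th * (V0 - Vs r) = th * V0 + (\<Sum>l<M. - th * vv psi Sd (r l))"
      by (simp add: Vs_def sum_distrib_left sum_negf algebra_simps)
    finally show "1 \<le> exp (th * V0) * exp (\<Sum>l<M. - th * vv psi Sd (r l))" by (simp add: exp_add[symmetric])
  qed simp
  also have "\<dots> = exp (th * V0) * (measure_pmf.expectation (row_dist N p u q) (\<lambda>\<rho>. exp (- th * vv psi Sd \<rho>))) ^ M"
    using rows_expectation_exp_sum[of M N p u q "\<lambda>\<rho>. - th * vv psi Sd \<rho>"] by simp
  also have "measure_pmf.expectation (row_dist N p u q) (\<lambda>\<rho>. exp (- th * vv psi Sd \<rho>))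
     = exp (th * psi) + (exp (- th) - exp (th * psi)) * Gam"
    using E_G[of p u q Sd N th psi] p_pos p_le1 u q SdN
    by (simp add: Gam_def a_def mult.commute)
  also have "(exp (th * psi) + (exp (- th) - exp (th * psi)) * Gam) ^ M \<le> exp (M * (- th * (Gam - (1 - Gam) * psi) + th^2))"
  proof (rule pow_exp_le)
    show "exp (th * psi) + (exp (- th) - exp (th * psi)) * Gam \<le> exp (- th * (Gam - (1 - Gam) * psi) + th\<^sup>2)"
      by (rule bound_G) (use Gam_bounds psi_bounds th in auto)
    have "exp (th * psi) + (exp (- th) - exp (th * psi)) * Gam = Gam * exp (- th) + (1 - Gam) * exp (th * psi)"
      by (simp add: algebra_simps)
    also have "\<dots> \<ge> 0" using Gam_bounds by (intro add_nonneg_nonneg mult_nonneg_nonneg) auto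
    finally show "0 \<le> exp (th * psi) + (exp (- th) - exp (th * psi)) * Gam" .
  qed
  then have "exp (th * V0) * (exp (th * psi) + (exp (- th) - exp (th * psi)) * Gam) ^ M \<le>
      exp (th * V0) * exp (M * (- th * (Gam - (1 - Gam) * psi) + th^2))"
    by (intro mult_left_mono) auto
  also have "\<dots> = exp (th * V0 + M * (- th * (Gam - (1 - Gam) * psi) + th^2))" by (simp add: exp_add)
  also have "\<dots> \<le> exp (- E0)"
  proof -
    have X: "nd + del \<le> Gam - (1 - Gam) * psi" by (rule nn_gap)
    have "th * V0 + M * (- th * (Gam - (1 - Gam) * psi) + th^2) = (M * th) * ((nd + 3 * del / 8) - (Gam - (1 - Gam) * psi) + th)"
      by (simp add: V0_def tau_def algebra_simps power2_eq_square)
    also have "\<dots> \<le> (M * th) * (- 5 * del / 8 + th)"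
      using X th by (intro mult_left_mono) auto
    also have "\<dots> = - 9 * (M * del^2) / 256" by (simp add: th_def power2_eq_square algebra_simps)
    also have "\<dots> \<le> - E0"
    proof -
      have a1: "real M * p \<le> real M * 1" by (rule mult_left_mono[OF p_le1]) simp
      have "real M * p * del^2 \<le> real M * 1 * del^2" by (rule mult_right_mono[OF a1]) simp
      moreover have "0 \<le> M * del^2" by simp
      ultimately show ?thesis unfolding E0_def by linarith
    qed
    finally show ?thesis by simp
  qed
  finally show ?thesis .
qed


lemma prob_D: assumes d: "d \<in> Sd"
  shows "measure_pmf.prob (rows_dist M N p u q) {r. t0 \<le> wr d r} \<le> exp (- E0)"
proof -
  define lam where "lam = del / 8"
  have lam: "0 \<le> lam" "lam \<le> 1" using del_bounds by (auto simp: lam_def)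
  have "measure_pmf.prob (rows_dist M N p u q) {r. t0 \<le> wr d r} \<le>
        measure_pmf.expectation (rows_dist M N p u q) (\<lambda>r. exp (- lam * t0) * exp (\<Sum>l<M. lam * Tk psi Sd d (r l)))"
  proof (rule markov_pmf[OF fin_rows])
    fix r assume "r \<in> {r. t0 \<le> wr d r}"
    then have "0 \<le> lam * (wr d r - t0)" using lam by simp
    also have "lam * (wr d r - t0) = - lam * t0 + (\<Sum>l<M. lam * Tk psi Sd d (r l))"
      by (simp add: wr_def sum_distrib_left algebra_simps)
    finally show "1 \<le> exp (- lam * t0) * exp (\<Sum>l<M. lam * Tk psi Sd d (r l))" by (simp add: exp_add[symmetric])
  qed simp
  also have "\<dots> = exp (- lam * t0) * (measure_pmf.expectation (row_dist N p u q) (\<lambda>\<rho>. exp (lam * Tk psi Sd d \<rho>))) ^ M"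
    using rows_expectation_exp_sum[of M N p u q "\<lambda>\<rho>. lam * Tk psi Sd d \<rho>"] by simp
  also have "measure_pmf.expectation (row_dist N p u q) (\<lambda>\<rho>. exp (lam * Tk psi Sd d \<rho>))
     = 1 + (exp (- lam * psi) - 1) * p + (exp lam - exp (- lam * psi)) * (p * s)"
    using E_D[of p u q Sd N d lam psi] p_pos p_le1 u q SdN d s_eq by simp
  also have "(1 + (exp (- lam * psi) - 1) * p + (exp lam - exp (- lam * psi)) * (p * s)) ^ M
      \<le> exp (M * (p * (lam * (s - (1 - s) * psi) + lam^2)))"
  proof (rule pow_exp_le)
    show "1 + (exp (- lam * psi) - 1) * p + (exp lam - exp (- lam * psi)) * (p * s) \<le> exp (p * (lam * (s - (1 - s) * psi) + lam^2))"
      by (rule bound_D) (use s_bounds psi_bounds lam p_pos in auto)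
    have "1 + (exp (- lam * psi) - 1) * p + (exp lam - exp (- lam * psi)) * (p * s)
        = (1 - p) + p * ((1 - s) * exp (- lam * psi) + s * exp lam)" by (simp add: algebra_simps)
    also have "\<dots> \<ge> 0" using s_bounds p_pos p_le1
      by (intro add_nonneg_nonneg mult_nonneg_nonneg) auto
    finally show "0 \<le> 1 + (exp (- lam * psi) - 1) * p + (exp lam - exp (- lam * psi)) * (p * s)" .
  qed
  then have "exp (- lam * t0) * (1 + (exp (- lam * psi) - 1) * p + (exp lam - exp (- lam * psi)) * (p * s)) ^ M \<le>
      exp (- lam * t0) * exp (M * (p * (lam * (s - (1 - s) * psi) + lam^2)))"
    by (intro mult_left_mono) auto
  also have "\<dots> = exp (- lam * t0 + M * (p * (lam * (s - (1 - s) * psi) + lam^2)))" by (rule mult_exp_exp)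
  also have "- lam * t0 + M * (p * (lam * (s - (1 - s) * psi) + lam^2)) = - (4 * E0)"
    by (simp add: t0_def tau_def nd_def lam_def E0_def power2_eq_square algebra_simps)
  also have "exp (- (4 * E0)) \<le> exp (- E0)"
    using p_pos by (simp add: E0_def)
  finally show ?thesis .
qed

lemma prob_S: assumes S: "S \<in> Sets"
  shows "measure_pmf.prob (rows_dist M N p u q) {r. V0 \<le> Vs r \<and> (\<forall>k\<in>S. wr k r \<le> t0)} \<le> exp (- (mm * E0))"
proof -
  have SN: "S \<subseteq> {..<N}" "S \<inter> Sd = {}" and cS: "card S = mm" using S by (auto simp: Sets_def)
  have fS: "finite S" using SN(1) finite_subset by blast
  define lam where "lam = del / 16"
  define mu where "mu = real mm * p * lam"
  have lam: "0 \<le> lam" "lam \<le> 1" using del_bounds by (auto simp: lam_def)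
  have mu: "0 \<le> mu" using lam p_pos by (simp add: mu_def)
  let ?c = "- mu * V0 + lam * (mm * t0)"
  have "measure_pmf.prob (rows_dist M N p u q) {r. V0 \<le> Vs r \<and> (\<forall>k\<in>S. wr k r \<le> t0)} \<le>
        measure_pmf.expectation (rows_dist M N p u q) (\<lambda>r. exp ?c * exp (\<Sum>l<M. mu * vv psi Sd (r l) - lam * (\<Sum>k\<in>S. Tk psi Sd k (r l))))"
  proof (rule markov_pmf[OF fin_rows])
    fix r assume r: "r \<in> {r. V0 \<le> Vs r \<and> (\<forall>k\<in>S. wr k r \<le> t0)}"
    have "(\<Sum>k\<in>S. wr k r) \<le> of_nat (card S) * t0" using r by (intro sum_bounded_above) auto
    then have "0 \<le> lam * (mm * t0 - (\<Sum>k\<in>S. wr k r))" using lam cS by simp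
    moreover have "0 \<le> mu * (Vs r - V0)" using r mu by simp
    ultimately have "0 \<le> mu * (Vs r - V0) + lam * (mm * t0 - (\<Sum>k\<in>S. wr k r))" by simp
    also have "mu * (Vs r - V0) + lam * (mm * t0 - (\<Sum>k\<in>S. wr k r)) =
        ?c + (\<Sum>l<M. mu * vv psi Sd (r l) - lam * (\<Sum>k\<in>S. Tk psi Sd k (r l)))"
    proof -
      have "(\<Sum>k\<in>S. wr k r) = (\<Sum>l<M. \<Sum>k\<in>S. Tk psi Sd k (r l))"
        unfolding wr_def by (rule sum.swap)
      then show ?thesis
        by (simp add: Vs_def sum_subtractf sum_distrib_left algebra_simps)
    qed
    finally show "1 \<le> exp ?c * exp (\<Sum>l<M. mu * vv psi Sd (r l) - lam * (\<Sum>k\<in>S. Tk psi Sd k (r l)))"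
      by (simp add: exp_add[symmetric])
  qed simp
  also have "\<dots> = exp ?c * (measure_pmf.expectation (row_dist N p u q) (\<lambda>\<rho>. exp (mu * vv psi Sd \<rho> - lam * (\<Sum>k\<in>S. Tk psi Sd k \<rho>)))) ^ M"
    using rows_expectation_exp_sum[of M N p u q "\<lambda>\<rho>. mu * vv psi Sd \<rho> - lam * (\<Sum>k\<in>S. Tk psi Sd k \<rho>)"] by simp
  also have "measure_pmf.expectation (row_dist N p u q) (\<lambda>\<rho>. exp (mu * vv psi Sd \<rho> - lam * (\<Sum>k\<in>S. Tk psi Sd k \<rho>)))
     = exp (- (real mm * p * lam) * psi) * (1 - p + p * exp (lam * psi)) ^ mm
     + Gam * (exp (real mm * p * lam) * (1 - p + p * exp (- lam)) ^ mm
         - exp (- (real mm * p * lam) * psi) * (1 - p + p * exp (lam * psi)) ^ mm)"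
    using E_Srow[of p u q Sd N S lam mu psi] p_pos p_le1 u q SdN SN lam cS
    by (simp add: Gam_def a_def mu_def mult.commute)
  also have "(exp (- (real mm * p * lam) * psi) * (1 - p + p * exp (lam * psi)) ^ mm
     + Gam * (exp (real mm * p * lam) * (1 - p + p * exp (- lam)) ^ mm
         - exp (- (real mm * p * lam) * psi) * (1 - p + p * exp (lam * psi)) ^ mm)) ^ M
     \<le> exp (M * (mm * p * lam^2))"
  proof (rule pow_exp_le)
    show "exp (- (real mm * p * lam) * psi) * (1 - p + p * exp (lam * psi)) ^ mm
     + Gam * (exp (real mm * p * lam) * (1 - p + p * exp (- lam)) ^ mm
         - exp (- (real mm * p * lam) * psi) * (1 - p + p * exp (lam * psi)) ^ mm) \<le> exp (mm * p * lam^2)"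
      by (rule bound_S) (use Gam_bounds psi_bounds lam p_pos p_le1 in auto)
    have n1: "0 \<le> 1 - p + p * exp (- lam)" using p_pos p_le1 by (intro add_nonneg_nonneg) auto
    have n2: "0 \<le> 1 - p + p * exp (lam * psi)" using p_pos p_le1 by (intro add_nonneg_nonneg) auto
    have "exp (- (real mm * p * lam) * psi) * (1 - p + p * exp (lam * psi)) ^ mm
     + Gam * (exp (real mm * p * lam) * (1 - p + p * exp (- lam)) ^ mm
         - exp (- (real mm * p * lam) * psi) * (1 - p + p * exp (lam * psi)) ^ mm)
       = (1 - Gam) * (exp (- (real mm * p * lam) * psi) * (1 - p + p * exp (lam * psi)) ^ mm)
         + Gam * (exp (real mm * p * lam) * (1 - p + p * exp (- lam)) ^ mm)"
      by (simp add: algebra_simps)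
    also have "\<dots> \<ge> 0" using Gam_bounds n1 n2
      by (intro add_nonneg_nonneg mult_nonneg_nonneg) auto
    finally show "0 \<le> exp (- (real mm * p * lam) * psi) * (1 - p + p * exp (lam * psi)) ^ mm
     + Gam * (exp (real mm * p * lam) * (1 - p + p * exp (- lam)) ^ mm
         - exp (- (real mm * p * lam) * psi) * (1 - p + p * exp (lam * psi)) ^ mm)" .
  qed
  then have "exp ?c * (exp (- (real mm * p * lam) * psi) * (1 - p + p * exp (lam * psi)) ^ mm
     + Gam * (exp (real mm * p * lam) * (1 - p + p * exp (- lam)) ^ mm
         - exp (- (real mm * p * lam) * psi) * (1 - p + p * exp (lam * psi)) ^ mm)) ^ M
     \<le> exp ?c * exp (M * (mm * p * lam^2))"
    by (intro mult_left_mono) auto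
  also have "\<dots> = exp (?c + M * (mm * p * lam^2))" by (rule mult_exp_exp)
  also have "?c + M * (mm * p * lam^2) = - (mm * E0)"
    by (simp add: mu_def t0_def V0_def tau_def lam_def E0_def power2_eq_square algebra_simps)
  finally show ?thesis .
qed

end


context gts begin

lemma Sets_card: "card Sets = (N - K) choose mm"
  unfolding Sets_def using n_subsets[OF Nd_fin, of mm] Nd_card by simp

lemma Sets_fin: "finite Sets"
  unfolding Sets_def using Nd_fin by (auto intro: finite_subset[of _ "Pow ({..<N} - Sd)"])

lemma fail_bound:
  "1 - measure_pmf.prob (gt_dist M N p u q) {(X, D, W). colpal_success M N L Sd psi X D W}
     \<le> (1 + real K) * exp (- E0) + real ((N - K) choose mm) * exp (- (mm * E0))"
proof -
  let ?R = "rows_dist M N p u q"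
  let ?A = "{r. Vs r < V0}" let ?B = "\<Union>d\<in>Sd. {r. t0 \<le> wr d r}"
  let ?C = "\<Union>S\<in>Sets. {r. V0 \<le> Vs r \<and> (\<forall>k\<in>S. wr k r \<le> t0)}"
  have finSd: "finite Sd" using SdN finite_subset by blast
  have "measure_pmf.prob ?R {r. \<not> goodr r} \<le> measure_pmf.prob ?R (?A \<union> ?B \<union> ?C)"
    by (rule measure_pmf.finite_measure_mono) (use bad_subset in auto)
  also have "\<dots> \<le> measure_pmf.prob ?R (?A \<union> ?B) + measure_pmf.prob ?R ?C"
    by (rule measure_Un_le) auto
  also have "measure_pmf.prob ?R (?A \<union> ?B) \<le> measure_pmf.prob ?R ?A + measure_pmf.prob ?R ?B"
    by (rule measure_Un_le) auto
  also have "measure_pmf.prob ?R ?B \<le> (\<Sum>d\<in>Sd. measure_pmf.prob ?R {r. t0 \<le> wr d r})"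
    by (rule measure_pmf.finite_measure_subadditive_finite) (use finSd in auto)
  also have "\<dots> \<le> (\<Sum>d\<in>Sd. exp (- E0))" by (intro sum_mono prob_D)
  also have "measure_pmf.prob ?R ?C \<le> (\<Sum>S\<in>Sets. measure_pmf.prob ?R {r. V0 \<le> Vs r \<and> (\<forall>k\<in>S. wr k r \<le> t0)})"
    by (rule measure_pmf.finite_measure_subadditive_finite) (use Sets_fin in auto)
  also have "\<dots> \<le> (\<Sum>S\<in>Sets. exp (- (mm * E0)))" by (intro sum_mono prob_S)
  finally have b: "measure_pmf.prob ?R {r. \<not> goodr r} \<le> measure_pmf.prob ?R ?A + real K * exp (- E0) + real (card Sets) * exp (- (mm * E0))"
    by simp
  have "measure_pmf.prob ?R {r. \<not> goodr r} = 1 - measure_pmf.prob ?R {r. goodr r}"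
  proof -
    have "{r. \<not> goodr r} = space (measure_pmf ?R) - {r. goodr r}" by auto
    then show ?thesis using measure_pmf.prob_compl[of "{r. goodr r}" ?R] by simp
  qed
  then have "1 - measure_pmf.prob ?R {r. goodr r} \<le> exp (- E0) + real K * exp (- E0) + real (card Sets) * exp (- (mm * E0))"
    using b prob_G by linarith
  moreover note success_ge
  ultimately show ?thesis unfolding Sets_card by (simp add: algebra_simps)
qed

end


context gts begin

lemma main_bound:
  fixes c0 :: real
  assumes c0: "0 < c0"
    and Mh: "(1 + c0) * (real K * (1 - u) / ((1 - q) * (1 - g0)\<^sup>2)) *
       (165888 * ln (real K * real ((N - K) choose (L - 1))) / (real (N - K) - real (L - 1)) + 165888 * ln (real K)) \<le> real M"
  shows "measure_pmf.prob (gt_dist M N p u q) {(X, D, W). colpal_success M N L Sd psi X D W}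
     > 1 - 2 * exp (- c0 * ln (real K * real ((N - K) choose (L - 1)))) - exp (- c0 * ln (real K))"
proof -
  define Cb where "Cb = (N - K) choose (L - 1)"
  define B where "B = real K * real Cb"
  define Z where "Z = ln B / real mm + ln (real K)"
  define W where "W = real K * (1 - u) / ((1 - q) * (1 - g0)\<^sup>2)"
  have LNK: "L - 1 \<le> N - K" using LN L1 by simp
  have mm_eq: "real mm = real (N - K) - real (L - 1)" using LNK by (simp add: mm_def)
  have mm1: "1 \<le> mm" using LN L1 by (simp add: mm_def)
  have Cb1: "1 \<le> Cb" unfolding Cb_def using LNK by (simp add: Suc_leI)
  have Cb_mm: "(N - K) choose mm = Cb" unfolding Cb_def mm_def using LNK
    by (metis binomial_symmetric)
  have K2: "2 \<le> real K" by (rule K2)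
  have Cb1': "1 \<le> real Cb" using Cb1 by simp
  have "2 * 1 \<le> real K * real Cb" by (rule mult_mono) (use K2 Cb1' in auto)
  then have B2: "2 \<le> B" unfolding B_def by simp
  have lnB: "0 \<le> ln B" using B2 by simp
  have lnK: "0 < ln (real K)" using K2 by simp
  have Z1: "ln (real K) \<le> Z" unfolding Z_def using lnB mm1 by simp
  have Z2: "ln B \<le> real mm * Z"
  proof -
    have "real mm * Z = ln B + real mm * ln (real K)" unfolding Z_def using mm1 by (simp add: field_simps)
    moreover have "0 \<le> real mm * ln (real K)" using lnK by simp
    ultimately show ?thesis by linarith
  qed
  have g: "0 < 1 - g0" "1 - g0 \<le> 1" using g0_bounds by auto
  have Wpos: "0 < W" unfolding W_def using u q g K2 by (intro divide_pos_pos mult_pos_pos) auto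
  have Mh': "(1 + c0) * W * (165888 * Z) \<le> real M"
    using Mh unfolding W_def Z_def B_def Cb_def mm_eq by (simp add: algebra_simps add_divide_distrib)
  have pW: "p * (1 - g0)^2 * (1 - q) * W = 1"
  proof -
    define A where "A = (1 - u) * real K"
    define Bq where "Bq = (1 - q) * (1 - g0)^2"
    have A: "0 < A" unfolding A_def using u K2 by simp
    have Bq: "0 < Bq" unfolding Bq_def using q g by simp
    have "p * (1 - g0)^2 * (1 - q) * W = (1 / A) * Bq * (A / Bq)"
      unfolding W_def p_def A_def Bq_def by (simp add: mult_ac)
    also have "\<dots> = 1" using A Bq by simp
    finally show ?thesis .
  qed
  have E0ge: "2 * (1 + c0) * Z \<le> E0"
  proof -
    have "(1 + c0) * (165888 * Z) \<le> real M / W" using Mh' Wpos by (simp add: field_simps)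
    also have "real M / W = real M * (p * (1 - g0)^2 * (1 - q) * W) / W"
      using pW by simp
    also have "\<dots> = real M * p * (1 - g0)^2 * (1 - q)"
      using Wpos by (simp add: mult.assoc)
    also have "\<dots> \<le> real M * p * (1 - g0)^2"
      using q p_pos by (intro mult_left_le) auto
    also have "real M * p * (1 - g0)^2 = 82944 * (real M * p * ((1 - g0) / 18)^2 / 256)"
      by (simp add: power2_eq_square)
    also have "\<dots> \<le> 82944 * E0"
    proof -
      have "((1 - g0) / 18)^2 \<le> del^2" using del_bounds g by (intro power_mono) auto
      then have "real M * p * ((1 - g0) / 18)^2 \<le> real M * p * del^2"
        using p_pos by (intro mult_left_mono) auto
      then show ?thesis unfolding E0_def by simp
    qed
    finally show ?thesis by (simp add: algebra_simps)
  qed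
  have T1: "(1 + real K) * exp (- E0) < exp (- c0 * ln (real K))"
  proof -
    have "2 * (1 + c0) * ln (real K) \<le> 2 * (1 + c0) * Z" by (intro mult_left_mono) (use Z1 c0 in auto)
    then have "2 * (1 + c0) * ln (real K) \<le> E0" using E0ge by linarith
    then have "exp (- E0) \<le> exp (- (2 * (1 + c0) * ln (real K)))" by simp
    then have "(1 + real K) * exp (- E0) \<le> (1 + real K) * exp (- (2 * (1 + c0) * ln (real K)))"
      using K2 by (intro mult_left_mono) auto
    also have "\<dots> = exp (ln (1 + real K)) * exp (- (2 * (1 + c0) * ln (real K)))"
      using K2 by simp
    also have "\<dots> = exp (ln (1 + real K) - 2 * (1 + c0) * ln (real K))"
      by (simp only: mult_exp_exp) simp
    also have "\<dots> < exp (- c0 * ln (real K))"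
    proof -
      have "2 * real K \<le> real K * real K" by (rule mult_right_mono) (use K2 in auto)
      then have "1 + real K < real K * real K" using K2 by linarith
      then have "ln (1 + real K) < ln (real K * real K)" using K2 by simp
      also have "\<dots> = 2 * ln (real K)" using K2 by (simp add: ln_mult)
      finally have "ln (1 + real K) < 2 * ln (real K)" .
      moreover have "0 \<le> c0 * ln (real K)" using c0 lnK by simp
      ultimately show ?thesis by (simp add: algebra_simps)
    qed
    finally show ?thesis .
  qed
  have T2: "real Cb * exp (- (real mm * E0)) \<le> exp (- c0 * ln B)"
  proof -
    have "2 * (1 + c0) * ln B \<le> real mm * E0"
    proof -
      have "2 * (1 + c0) * ln B \<le> 2 * (1 + c0) * (real mm * Z)" using Z2 c0 by (intro mult_left_mono) auto
      also have "\<dots> = real mm * (2 * (1 + c0) * Z)" by simp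
      also have "\<dots> \<le> real mm * E0" using E0ge by (intro mult_left_mono) auto
      finally show ?thesis .
    qed
    then have "exp (- (real mm * E0)) \<le> exp (- (2 * (1 + c0) * ln B))" by simp
    then have "real Cb * exp (- (real mm * E0)) \<le> B * exp (- (2 * (1 + c0) * ln B))"
      unfolding B_def using K2 Cb1 by (intro mult_mono) auto
    also have "\<dots> = exp (ln B) * exp (- (2 * (1 + c0) * ln B))"
      using B2 by simp
    also have "\<dots> = exp (ln B - 2 * (1 + c0) * ln B)"
      by (simp only: mult_exp_exp) simp
    also have "\<dots> \<le> exp (- c0 * ln B)"
    proof -
      have "0 \<le> c0 * ln B" using lnB c0 by simp
      then show ?thesis using lnB by (simp add: algebra_simps)
    qed
    finally show ?thesis .
  qed
  have F: "1 - measure_pmf.prob (gt_dist M N p u q) {(X, D, W). colpal_success M N L Sd psi X D W}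
     \<le> (1 + real K) * exp (- E0) + real Cb * exp (- (real mm * E0))"
    using fail_bound Cb_mm by simp
  have "0 \<le> exp (- c0 * ln B)" by simp
  then show ?thesis using F T1 T2 unfolding B_def Cb_def by linarith
qed

end

theorem theorem3:
  fixes c0 :: real
  assumes "c0 > 0"
  shows "\<exists>Ca1 Ca2 :: real. Ca1 > 0 \<and> Ca2 > 0 \<and>
    (\<forall>(N::nat) (K::nat) (L::nat) (M::nat) (Sd::nat set) (u::real) (q::real).
      Sd \<subseteq> {..<N} \<longrightarrow> card Sd = K \<longrightarrow> K > 1 \<longrightarrow> 1 \<le> L \<longrightarrow> L \<le> N - K \<longrightarrow>
      0 \<le> u \<longrightarrow> u < 1/2 \<longrightarrow> 0 \<le> q \<longrightarrow> q < 1/2 \<longrightarrow>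
      (let p = 1 / ((1 - u) * real K);
           \<Gamma> = (1 - q) * (1 - (1 - u) * p) ^ K;
           \<gamma>0 = u / (1 - (1 - u) * p);
           \<psi>0 = min (\<gamma>0 * \<Gamma> / (1 - \<gamma>0 * \<Gamma>)) (\<Gamma> / (2 * (1 - \<Gamma>)));
           B = real K * real ((N - K) choose (L - 1))
       in real M \<ge> (1 + c0) * (real K * (1 - u) / ((1 - q) * (1 - \<gamma>0)\<^sup>2)) *
                     (Ca1 * ln B / (real (N - K) - real (L - 1)) + Ca2 * ln (real K))
          \<longrightarrow> measure_pmf.prob (gt_dist M N p u q)
                {(X, D, W). colpal_success M N L Sd \<psi>0 X D W}
              > 1 - 2 * exp (- c0 * ln B) - exp (- c0 * ln (real K))))"
proof (intro exI[of _ 165888] conjI allI impI)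
  fix N K L M :: nat and Sd :: "nat set" and u q :: real
  assume h: "Sd \<subseteq> {..<N}" "card Sd = K" "K > 1" "1 \<le> L" "L \<le> N - K" "0 \<le> u" "u < 1/2" "0 \<le> q" "q < 1/2"
  interpret gts N L M Sd u q
    by unfold_locales (use h in auto)
  have m: "\<And>c0. 0 < c0 \<Longrightarrow> (1 + c0) * (real (card Sd) * (1 - u) / ((1 - q) * (1 - g0)\<^sup>2)) *
       (165888 * ln (real (card Sd) * real ((N - card Sd) choose (L - 1))) / (real (N - card Sd) - real (L - 1)) + 165888 * ln (real (card Sd))) \<le> real M \<Longrightarrow>
     measure_pmf.prob (gt_dist M N p u q) {(X, D, W). colpal_success M N L Sd psi X D W}
     > 1 - 2 * exp (- c0 * ln (real (card Sd) * real ((N - card Sd) choose (L - 1)))) - exp (- c0 * ln (real (card Sd)))"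
    by (rule main_bound)
  show "let p = 1 / ((1 - u) * real K);
           \<Gamma> = (1 - q) * (1 - (1 - u) * p) ^ K;
           \<gamma>0 = u / (1 - (1 - u) * p);
           \<psi>0 = min (\<gamma>0 * \<Gamma> / (1 - \<gamma>0 * \<Gamma>)) (\<Gamma> / (2 * (1 - \<Gamma>)));
           B = real K * real ((N - K) choose (L - 1))
       in real M \<ge> (1 + c0) * (real K * (1 - u) / ((1 - q) * (1 - \<gamma>0)\<^sup>2)) *
                     (165888 * ln B / (real (N - K) - real (L - 1)) + 165888 * ln (real K))
          \<longrightarrow> measure_pmf.prob (gt_dist M N p u q)
                {(X, D, W). colpal_success M N L Sd \<psi>0 X D W}
              > 1 - 2 * exp (- c0 * ln B) - exp (- c0 * ln (real K))"
    unfolding Let_def h(2)[symmetric]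
    using m[OF assms, unfolded psi_def g0_def Gam_def a_def p_def] by blast
qed simp_all


end
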